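(* Let $n$ and $d$ be positive integers such that the largest prime $q_d$ smaller than $n/d$ exists and satisfies $q_d>n/(d+1)$, and let $\beta_d=n-dq_d$. Let $p^a$ ($p$ prime, $a\ge1$) be a prime power dividing $n$ with $p\ne q_d$. For each integer $\delta$ with $0\le\delta\le\beta_d$, let $N(\delta)$ be the number of integer solutions $(x,y)$ of $p^a x-q_d y=\delta$ with $x>0$ and $0\le y\le\lfloor d/2\rfloor$. Then $n$ satisfies the $N$-variation of Condition 1 with \[N=2+\sum_{\delta=0}^{\beta_d}N(\delta).\]
   Context: A positive integer $n$ satisfies the $N$-variation of Condition 1 if there exist $N$ different primes $p_1,\dots,p_N$ such that for every $1\le k\le n-1$, $\binom{n}{k}$ is divisible by at least one of $p_1,\dots,p_N$. *)

theory Defs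
  imports "HOL-Computational_Algebra.Primes" Complex_Main
begin

definition cond1_var :: "nat \<Rightarrow> nat \<Rightarrow> bool" where
  "cond1_var N n \<longleftrightarrow>
     (\<exists>P :: nat set. finite P \<and> card P = N \<and> (\<forall>p\<in>P. prime p) \<and>
        (\<forall>k. 1 \<le> k \<and> k \<le> n - 1 \<longrightarrow> (\<exists>p\<in>P. p dvd (n choose k))))"

definition Nsol :: "nat \<Rightarrow> nat \<Rightarrow> nat \<Rightarrow> nat \<Rightarrow> nat \<Rightarrow> nat" where
  "Nsol p a q d \<delta> = card {(x :: int, y :: int).
      int p ^ a * x - int q * y = int \<delta> \<and> x > 0 \<and> 0 \<le> y \<and> y \<le> int (d div 2)}"

end

theory Submission
  imports Defs
begin

lemma q_dvd_choose:
  fixes q :: nat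
  assumes q: "prime q"
  shows "\<forall>k. k mod q > n mod q \<longrightarrow> q dvd (n choose k)"
proof (induction n)
  case 0
  show ?case
  proof (intro allI impI)
    fix k :: nat assume "k mod q > 0 mod q"
    then have "k \<noteq> 0" by (cases k) auto
    then show "q dvd (0 choose k)" by (cases k) auto
  qed
next
  case (Suc m)
  show ?case
  proof (intro allI impI)
    fix k assume k: "k mod q > Suc m mod q"
    then have "k \<noteq> 0" by (cases k) auto
    then obtain k' where kk: "k = Suc k'" using not0_implies_Suc by blast
    show "q dvd (Suc m choose k)"
    proof (cases "Suc m mod q = 0")
      case True
      have "q dvd Suc m" using True by (simp add: dvd_eq_mod_eq_0)
      then have "q dvd Suc m * (m choose k')" by (rule dvd_mult2)
      then have "q dvd (Suc m choose Suc k') * Suc k'" by (simp only: Suc_times_binomial_eq)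
      then have "q dvd (Suc m choose Suc k') \<or> q dvd Suc k'" using q prime_dvd_mult_iff by blast
      moreover have "\<not> q dvd Suc k'" using k kk True by (simp add: dvd_eq_mod_eq_0)
      ultimately show ?thesis using kk by simp
    next
      case False
      have e1: "Suc m mod q = Suc (m mod q)"
        using False by (simp add: mod_Suc split: if_splits)
      have e2: "k mod q = Suc (k' mod q)"
        using k kk e1 by (simp add: mod_Suc split: if_splits)
      have "q dvd (m choose k')" using Suc.IH e1 e2 k by simp
      moreover have "q dvd (m choose Suc k')" using Suc.IH e1 e2 k kk by simp
      ultimately show ?thesis using kk by simp
    qed
  qed
qed

lemma p_dvd_choose:
  fixes p :: nat
  assumes p: "prime p" and pa: "p ^ a dvd n" and nk: "\<not> p ^ a dvd k" and k: "0 < k"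
  shows "p dvd (n choose k)"
proof (rule ccontr)
  assume np: "\<not> p dvd (n choose k)"
  have "n \<noteq> 0"
  proof
    assume "n = 0"
    then have "n choose k = 0" using k by (cases k) auto
    then show False using np by (metis dvd_0_right)
  qed
  then obtain n' where nn: "n = Suc n'" using not0_implies_Suc by blast
  obtain k' where kk: "k = Suc k'" using k not0_implies_Suc by blast
  have "p ^ a dvd Suc n' * (n' choose k')" using pa nn by (metis dvd_mult2)
  then have "p ^ a dvd (Suc n' choose Suc k') * Suc k'" by (simp only: Suc_times_binomial_eq)
  then have "p ^ a dvd (n choose k) * k" using nn kk by simp
  moreover have "coprime (p ^ a) (n choose k)"
    using np p by (simp add: prime_imp_coprime coprime_commute)
  ultimately have "p ^ a dvd k" using coprime_dvd_mult_right_iff by blast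
  then show False using nk by simp
qed

lemma choose_ne_1:
  assumes "1 \<le> k" "k < n"
  shows "(n choose k) \<noteq> (1::nat)"
proof
  assume h: "n choose k = 1"
  obtain n' where nn: "n = Suc n'" using assms by (cases n) auto
  obtain k' where kk: "k = Suc k'" using assms by (cases k) auto
  have "Suc n' * (n' choose k') = (Suc n' choose Suc k') * Suc k'" by (rule Suc_times_binomial_eq)
  also have "\<dots> = Suc k'" using h nn kk by simp
  finally have e: "Suc n' * (n' choose k') = Suc k'" .
  have pos: "(n' choose k') > 0" using assms nn kk by simp
  have "Suc n' \<le> Suc n' * (n' choose k')" using pos by (cases "n' choose k'") auto
  then have "Suc n' \<le> Suc k'" using e by simp
  then show False using assms nn kk by simp
qed

lemma pad_primes:
  assumes "finite P" "\<forall>p\<in>P. prime (p::nat)" "card P \<le> N"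
  shows "\<exists>P'. finite P' \<and> card P' = N \<and> (\<forall>p\<in>P'. prime p) \<and> P \<subseteq> P'"
proof -
  have "\<not> finite ({p::nat. prime p} - P)" using primes_infinite assms(1) by auto
  then obtain B where B: "finite B" "card B = N - card P" "B \<subseteq> {p. prime p} - P"
    using infinite_arbitrarily_large by blast
  have "card (P \<union> B) = card P + card B" using B assms(1) by (subst card_Un_disjoint) auto
  then show ?thesis using B assms by (intro exI[of _ "P \<union> B"]) auto
qed


lemma Nsol_finite: "p > 0 \<Longrightarrow> finite {(x :: int, y :: int).
      int p ^ a * x - int q * y = int \<delta> \<and> x > 0 \<and> 0 \<le> y \<and> y \<le> int (d div 2)}"
  (is "_ \<Longrightarrow> finite ?S")
proof -
  assume p0: "p > 0"
  have "?S \<subseteq> {1..int q * int d + int \<delta>} \<times> {0..int d}"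
  proof (clarsimp)
    fix x y :: int
    assume h: "int p ^ a * x - int q * y = int \<delta>" "0 < x" "0 \<le> y" "y \<le> int (d div 2)"
    have "p ^ a \<noteq> 0 \<or> True" by simp
    have yd: "y \<le> int d" using h(4) by linarith
    have "int p ^ a * x = int q * y + int \<delta>" using h(1) by simp
    also have "\<dots> \<le> int q * int d + int \<delta>" using yd by (simp add: mult_left_mono)
    finally have A: "int p ^ a * x \<le> int q * int d + int \<delta>" .
    have "int p ^ a \<ge> 1" using p0 by (simp add: one_le_power)
    then have "x \<le> int p ^ a * x"
      using h by (simp add: mult_le_cancel_right1)
    then show "x \<le> int q * int d + int \<delta> \<and> y \<le> int d"
      using A yd h by (smt (verit) mult_nonneg_nonneg of_nat_0_le_iff)
  qed
  then show ?thesis by (rule finite_subset) auto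
qed

theorem mainTheorem15:
  fixes n d q p a :: nat
  assumes "n > 0" and "d > 0"
    and "prime q" and "real q < real n / real d"
    and "\<forall>r::nat. prime r \<and> real r < real n / real d \<longrightarrow> r \<le> q"
    and "real q > real n / real (d + 1)"
    and "prime p" and "a \<ge> 1" and "p ^ a dvd n" and "p \<noteq> q"
  shows "cond1_var (2 + (\<Sum>\<delta> = 0..n - d * q. Nsol p a q d \<delta>)) n"
proof -
  have "real q * real d < real n" using assms(2,4) by (simp add: field_simps)
  then have l1: "q * d < n" by (metis of_nat_less_iff of_nat_mult)
  have "real n < real q * real (d+1)" using assms(6) by (simp add: field_simps)
  then have l2: "n < q * (d+1)" by (metis of_nat_less_iff of_nat_mult)
  define \<beta> where "\<beta> = n - d * q"
  have nq: "n = q * d + \<beta>" using l1 \<beta>_def by (simp add: mult.commute)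
  have bq: "\<beta> < q" using l2 nq by simp
  have ndiv: "n div q = d" using nq bq by simp
  have nmod: "n mod q = \<beta>" using nq bq by simp
  define B where "B = {k. 1 \<le> k \<and> k \<le> n - 1 \<and> p ^ a dvd k \<and> k mod q \<le> \<beta> \<and> k div q \<le> d div 2}"
  define f where "f k = (SOME r. prime r \<and> r dvd (n choose k))" for k
  define S where "S \<delta> = {(x :: int, y :: int).
      int p ^ a * x - int q * y = int \<delta> \<and> x > 0 \<and> 0 \<le> y \<and> y \<le> int (d div 2)}" for \<delta>
  define P where "P = {p, q} \<union> f ` B"
  have finB: "finite B" unfolding B_def by (rule finite_subset[of _ "{..n}"]) auto
  have fprime: "prime (f k) \<and> f k dvd (n choose k)" if "k \<in> B" for k
  proof -
    have "1 \<le> k" "k < n" using that assms(1) unfolding B_def by auto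
    then have "\<exists>r. prime r \<and> r dvd (n choose k)" using choose_ne_1 prime_factor_nat by blast
    then show ?thesis unfolding f_def by (rule someI_ex)
  qed
  define g where "g k = (k mod q, (int (k div p ^ a), int (k div q)))" for k
  have inj: "inj_on g B"
  proof (rule inj_onI)
    fix k k' assume "g k = g k'"
    then have "k mod q = k' mod q" "k div q = k' div q" unfolding g_def by auto
    then show "k = k'" by (metis div_mult_mod_eq)
  qed
  have gB: "g ` B \<subseteq> (SIGMA \<delta>:{0..\<beta>}. S \<delta>)"
  proof
    fix z assume "z \<in> g ` B"
    then obtain k where k: "k \<in> B" and z: "z = g k" by blast
    have k1: "1 \<le> k" "p ^ a dvd k" "k mod q \<le> \<beta>" "k div q \<le> d div 2" using k unfolding B_def by auto
    have e1: "p ^ a * (k div p ^ a) = k" using k1(2) by simp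
    have e2: "q * (k div q) + k mod q = k" by simp
    have "int p ^ a * int (k div p ^ a) - int q * int (k div q) = int (k mod q)"
      using e1 e2 by (metis add_diff_cancel_left' of_nat_add of_nat_mult of_nat_power)
    moreover have "int (k div p ^ a) > 0" using e1 k1(1) by (metis gr0I mult_0_right not_one_le_zero of_nat_0_less_iff)
    ultimately show "z \<in> (SIGMA \<delta>:{0..\<beta>}. S \<delta>)" using k1 unfolding z g_def S_def by auto
  qed
  have cardB: "card B \<le> (\<Sum>\<delta> = 0..\<beta>. Nsol p a q d \<delta>)"
  proof -
    have "card B = card (g ` B)" using inj by (simp add: card_image)
    also have "\<dots> \<le> card (SIGMA \<delta>:{0..\<beta>}. S \<delta>)"
      using gB by (rule card_mono[rotated]) (auto simp: S_def Nsol_finite prime_gt_0_nat assms(7))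
    also have "\<dots> = (\<Sum>\<delta> = 0..\<beta>. card (S \<delta>))" by (rule card_SigmaI) (auto simp: S_def Nsol_finite prime_gt_0_nat assms(7))
    finally show ?thesis by (simp add: S_def Nsol_def)
  qed
  have finP: "finite P" unfolding P_def using finB by auto
  have primeP: "\<forall>r\<in>P. prime r" unfolding P_def using fprime assms(3,7) by auto
  have "card P \<le> card {p, q} + card (f ` B)" unfolding P_def by (rule card_Un_le)
  also have "\<dots> \<le> 2 + card B" using card_image_le[OF finB, of f] by (simp add: card_insert_if)
  finally have cardP: "card P \<le> 2 + (\<Sum>\<delta> = 0..\<beta>. Nsol p a q d \<delta>)" using cardB by simp
  have cover: "\<exists>r\<in>P. r dvd (n choose k)" if k: "1 \<le> k" "k \<le> n - 1" for k
  proof (cases "p ^ a dvd k")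
    case False
    then have "p dvd (n choose k)" using p_dvd_choose assms(7,9) k by auto
    then show ?thesis unfolding P_def by auto
  next
    case pk: True
    show ?thesis
    proof (cases "k mod q \<le> \<beta>")
      case False
      then have "q dvd (n choose k)" using q_dvd_choose[OF assms(3)] nmod by auto
      then show ?thesis unfolding P_def by auto
    next
      case km: True
      show ?thesis
      proof (cases "k div q \<le> d div 2")
        case True
        then have "k \<in> B" using k pk km unfolding B_def by auto
        then show ?thesis using fprime unfolding P_def by blast
      next
        case False
        define k' where "k' = n - k"
        have kn: "k \<le> n" using k by simp
        have y: "k div q \<le> d" using div_le_mono[OF kn, of q] ndiv by simp
        have ek: "k = q * (k div q) + k mod q" by simp
        have ek': "k' = q * (d - k div q) + (\<beta> - k mod q)"
        proof -
          have a1: "q * (k div q) \<le> q * d" using y by simp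
          have a2: "q * (d - k div q) = q * d - q * (k div q)" by (simp add: diff_mult_distrib2)
          show ?thesis unfolding k'_def a2 using nq ek a1 km by linarith
        qed
        have "\<beta> - k mod q < q" using bq by linarith
        then have m': "k' mod q = \<beta> - k mod q" and d': "k' div q = d - k div q"
          using ek' by simp_all
        have kB: "k' \<in> B" unfolding B_def using k False m' d' pk assms(9) unfolding k'_def
          by (auto simp: dvd_diff_nat)
        have eqc: "(n choose k') = (n choose k)" unfolding k'_def using binomial_symmetric[OF kn] by simp
        have "f k' \<in> P" using kB unfolding P_def by blast
        moreover have "f k' dvd (n choose k')" using fprime[OF kB] by blast
        ultimately show ?thesis using eqc by metis
      qed
    qed
  qed
  obtain P' where P': "finite P'" "card P' = 2 + (\<Sum>\<delta> = 0..\<beta>. Nsol p a q d \<delta>)"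
    "\<forall>r\<in>P'. prime r" "P \<subseteq> P'"
    using pad_primes[OF finP primeP cardP] by blast
  have cov': "\<forall>k. 1 \<le> k \<and> k \<le> n - 1 \<longrightarrow> (\<exists>r\<in>P'. r dvd (n choose k))"
  proof (intro allI impI)
    fix k assume "1 \<le> k \<and> k \<le> n - 1"
    then obtain r where "r \<in> P" "r dvd (n choose k)" using cover by blast
    then show "\<exists>r\<in>P'. r dvd (n choose k)" using P'(4) by blast
  qed
  have e: "(\<Sum>\<delta> = 0..n - d * q. Nsol p a q d \<delta>) = (\<Sum>\<delta> = 0..\<beta>. Nsol p a q d \<delta>)"
    by (simp only: \<beta>_def)
  show ?thesis unfolding cond1_var_def e
    by (rule exI[of _ P'], intro conjI, fact P'(1), fact P'(2), fact P'(3), fact cov')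
qed

end
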